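(* Let $a>0$ and $x_0=\frac{a}{a+1}$. For every $x\in[0,1]$ the series $$1-\sum_{n\ge1}(an)_{n-1}\frac{\bigl(x^a(1-x)\bigr)^n}{n!}$$ converges absolutely, and its value equals $g_a(x)$. Consequently this series equals $f_a(x)$ for $0\le x\le x_0$ and equals $x$ for $x_0\le x\le1$.
   Context: For $c$ real and integer $n$, $(c)_n=\Gamma(c+n)/\Gamma(c)$ is the Pochhammer symbol; in particular $(an)_{n-1}=\Gamma(an+n-1)/\Gamma(an)$ for $n\ge1$. For $a>0$ let $\phi_a(x)=x^a-x^{a+1}$ on $[0,1]$; it is strictly increasing on $[0,x_0]$ and strictly decreasing on $[x_0,1]$ with $x_0=a/(a+1)$. Let $l_a,r_a$ be the restrictions of $\phi_a$ to $[0,x_0]$ and $[x_0,1]$. Define $f_a(x)=r_a^{-1}(\phi_a(x))$ for $0\le x\le x_0$, $f_a(x)=l_a^{-1}(\phi_a(x))$ for $x_0\le x\le 1$ (the unique involution with $\phi_a\circ f_a=\phi_a$, $f_a\ne\mathrm{id}$ off $x_0$), and $g_a(x)=r_a^{-1}(\phi_a(x))$ for $0\le x\le1$. *)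

theory Defs
  imports "HOL-Analysis.Analysis"
begin

definition poch :: "real \<Rightarrow> nat \<Rightarrow> real" where
  "poch c n = Gamma (c + real n) / Gamma c"

definition phi :: "real \<Rightarrow> real \<Rightarrow> real" where
  "phi a x = x powr a - x powr (a + 1)"

definition xzero :: "real \<Rightarrow> real" where
  "xzero a = a / (a + 1)"

definition linv :: "real \<Rightarrow> real \<Rightarrow> real" where
  "linv a y = (THE t. t \<in> {0..xzero a} \<and> phi a t = y)"

definition rinv :: "real \<Rightarrow> real \<Rightarrow> real" where
  "rinv a y = (THE t. t \<in> {xzero a..1} \<and> phi a t = y)"

definition f_fun :: "real \<Rightarrow> real \<Rightarrow> real" where
  "f_fun a x = (if x \<le> xzero a then rinv a (phi a x) else linv a (phi a x))"

definition g_fun :: "real \<Rightarrow> real \<Rightarrow> real" where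
  "g_fun a x = rinv a (phi a x)"

definition term_a :: "real \<Rightarrow> real \<Rightarrow> nat \<Rightarrow> real" where
  "term_a a x n = poch (a * real n) (n - 1) * ((x powr a * (1 - x)) ^ n) / fact n"

end

theory Submission
  imports Defs
begin


definition rA :: "real \<Rightarrow> nat \<Rightarrow> real \<Rightarrow> real" where
 "rA z n x = (if n = 0 then 1 else x / fact n * (\<Prod>j<n-1. x + real n * z - 1 - real j))"

lemma rA_Suc: "rA z (Suc n) x = x / fact (Suc n) * (\<Prod>j<n. x + real (Suc n) * z - 1 - real j)"
  by (simp add: rA_def)

lemma rA_0 [simp]: "rA z 0 x = 1" by (simp add: rA_def)

lemma rA_at0: "n > 0 \<Longrightarrow> rA z n 0 = 0" by (simp add: rA_def)

lemma rA_shift: "rA z (Suc n) y - rA z (Suc n) (y - 1) = rA z n (y + z - 1)"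
proof (cases n)
  case 0 then show ?thesis by (simp add: rA_def)
next
  case (Suc m)
  define u where "u = y + real (Suc (Suc m)) * z"
  define Q where "Q = (\<Prod>j<m. u - 2 - real j)"
  have e1: "(\<Prod>j<Suc m. y + real (Suc (Suc m)) * z - 1 - real j) = (u - 1) * Q"
    unfolding Q_def u_def prod.lessThan_Suc_shift by (simp add: algebra_simps)
  have e2: "(\<Prod>j<Suc m. (y - 1) + real (Suc (Suc m)) * z - 1 - real j) = Q * (u - 2 - real m)"
    unfolding Q_def u_def prod.lessThan_Suc by (simp add: algebra_simps)
  have e3: "(\<Prod>j<m. (y + z - 1) + real (Suc m) * z - 1 - real j) = Q"
    unfolding Q_def u_def by (intro prod.cong) (auto simp: algebra_simps)
  have f: "fact (Suc (Suc m)) = real (Suc (Suc m)) * fact (Suc m)" by simp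
  have "y / fact (Suc (Suc m)) * ((u - 1) * Q) - (y - 1) / fact (Suc (Suc m)) * (Q * (u - 2 - real m))
      = (y + z - 1) / fact (Suc m) * Q"
  proof -
    have k: "y * ((u - 1) * Q) - (y - 1) * (Q * (u - 2 - real m)) = real (Suc (Suc m)) * ((y + z - 1) * Q)"
      unfolding u_def by (simp add: algebra_simps)
    have F: "fact (Suc m) > (0::real)" by simp
    define N where "N = real (Suc (Suc m))"
    have N: "N > 0" unfolding N_def by simp
    have "y / (N * fact (Suc m)) * ((u - 1) * Q) - (y - 1) / (N * fact (Suc m)) * (Q * (u - 2 - real m))
       = (y * ((u - 1) * Q) - (y - 1) * (Q * (u - 2 - real m))) / (N * fact (Suc m))"
      by (simp only: times_divide_eq_left diff_divide_distrib[symmetric])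
    also have "\<dots> = N * ((y + z - 1) * Q) / (N * fact (Suc m))" using k N_def by simp
    also have "\<dots> = (y + z - 1) / fact (Suc m) * Q" using N F by simp
    finally show ?thesis unfolding f N_def .
  qed
  then show ?thesis unfolding Suc rA_Suc e1 e2 e3 .
qed

definition rAp :: "real \<Rightarrow> nat \<Rightarrow> real poly" where
 "rAp z n = (if n = 0 then 1 else smult (1 / fact n) ([:0,1:] * (\<Prod>j<n-1. [:real n * z - 1 - real j, 1:])))"

lemma poly_rAp: "poly (rAp z n) x = rA z n x"
  by (auto simp: rAp_def rA_def poly_prod algebra_simps intro!: prod.cong)

lemma rothe: "(\<Sum>k\<le>n. rA z k x * rA z (n-k) y) = rA z n (x + y)"
proof (induction n arbitrary: x y)
  case 0 show ?case by simp
next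
  case (Suc n)
  define D where "D w = (\<Sum>k\<le>Suc n. rA z k x * rA z (Suc n - k) w) - rA z (Suc n) (x + w)" for w
  have shift: "D w = D (w - 1)" for w
  proof -
    have "(\<Sum>k\<le>Suc n. rA z k x * rA z (Suc n - k) w) - (\<Sum>k\<le>Suc n. rA z k x * rA z (Suc n - k) (w-1))
        = (\<Sum>k\<le>Suc n. rA z k x * (rA z (Suc n - k) w - rA z (Suc n - k) (w-1)))"
      by (simp add: sum_subtractf right_diff_distrib)
    also have "\<dots> = (\<Sum>k\<le>n. rA z k x * (rA z (Suc n - k) w - rA z (Suc n - k) (w-1)))"
      by (simp add: sum.atMost_Suc)
    also have "\<dots> = (\<Sum>k\<le>n. rA z k x * rA z (n - k) (w + z - 1))"
      by (intro sum.cong refl) (simp add: Suc_diff_le rA_shift)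
    also have "\<dots> = rA z n (x + (w + z - 1))" by (rule Suc.IH)
    also have "\<dots> = rA z (Suc n) (x + w) - rA z (Suc n) (x + w - 1)"
      using rA_shift[of z n "x + w"] by (simp add: algebra_simps)
    finally show ?thesis unfolding D_def by (simp add: algebra_simps)
  qed
  have D0: "D 0 = 0"
  proof -
    have "(\<Sum>k\<le>n. rA z k x * rA z (Suc n - k) 0) = 0"
      by (intro sum.neutral) (auto simp: rA_at0)
    then show ?thesis unfolding D_def by (simp add: sum.atMost_Suc)
  qed
  have Dm: "D (- real m) = 0" for m
  proof (induction m)
    case 0 then show ?case using D0 by simp
  next
    case (Suc m)
    have "- real (Suc m) = - real m - 1" by simp
    then show ?case using shift[of "- real m"] Suc.IH by metis
  qed
  define p where "p = (\<Sum>k\<le>Suc n. smult (rA z k x) (rAp z (Suc n - k))) - pcompose (rAp z (Suc n)) [:x, 1:]"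
  have pD: "poly p w = D w" for w
    by (simp add: p_def D_def poly_sum poly_pcompose poly_rAp algebra_simps)
  have "p = 0"
  proof (rule ccontr)
    assume "p \<noteq> 0"
    then have "finite {w. poly p w = 0}" by (rule poly_roots_finite)
    moreover have "range (\<lambda>m::nat. - real m) \<subseteq> {w. poly p w = 0}" using pD Dm by auto
    moreover have "infinite (range (\<lambda>m::nat. - real m))"
      by (rule range_inj_infinite) (auto simp: inj_def)
    ultimately show False using finite_subset by blast
  qed
  then have "D y = 0" using pD[of y] by simp
  then show ?case unfolding D_def by simp
qed


definition cc :: "real \<Rightarrow> nat \<Rightarrow> real" where
  "cc a n = (if n = 0 then 0 else poch (a * real n) (n - 1) / fact n)"

lemma cc_0 [simp]: "cc a 0 = 0" by (simp add: cc_def)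

lemma poch_pochhammer:
  assumes "c > 0" shows "poch c k = pochhammer c k"
proof -
  have "c \<notin> \<int>\<^sub>\<le>\<^sub>0" using assms by auto
  then show ?thesis by (simp add: poch_def pochhammer_Gamma)
qed

lemma cc_nonneg: "a > 0 \<Longrightarrow> cc a n \<ge> 0"
proof (cases "n = 0")
  case False
  assume a: "a > 0"
  have "a * real n > 0" using a False by simp
  moreover have "a * real n + real (n - 1) > 0" using a False by (simp add: add_pos_nonneg)
  ultimately show ?thesis using False
    by (auto simp: cc_def poch_def intro!: divide_nonneg_pos less_imp_le[OF Gamma_real_pos])
qed simp

lemma cc_1: assumes a: "a > 0" shows "cc a 1 = 1"
  using Gamma_real_pos[OF a] by (simp add: cc_def poch_def)

lemma sum_split_first: "(\<Sum>i\<le>m. g i) = g 0 + (\<Sum>i<m. g (Suc i))"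
  by (induction m) (simp_all add: sum.atMost_Suc add.assoc)

lemma cc_rA:
  assumes a: "a > 0" and n: "n > 0"
  shows "cc a n = - rA (a+1) n (-1)"
proof -
  obtain m where m: "n = Suc m" using n by (cases n) auto
  have "poch (a * real n) (n - 1) = pochhammer (a * real n) m"
    using a n m by (simp add: poch_pochhammer)
  also have "\<dots> = (\<Prod>j<m. a * real n + real j)"
    by (simp add: pochhammer_prod atLeast0LessThan)
  also have "\<dots> = (\<Prod>j<m. a * real n + real (m - Suc j))"
    by (rule prod.nat_diff_reindex[symmetric])
  also have "\<dots> = (\<Prod>j<m. - 1 + real n * (a + 1) - 1 - real j)"
    using m by (intro prod.cong refl) (auto simp: of_nat_diff algebra_simps)
  finally show ?thesis using m by (simp add: cc_def rA_def)
qed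

lemma cc_conv:
  assumes a: "a > 0" and n: "n > 0"
  shows "(\<Sum>i\<le>n. cc a i * cc a (n - i)) = 2 * cc a n + rA (a+1) n (-2)"
proof -
  obtain m where m: "n = Suc m" using n by (cases n) auto
  define A where "A i = rA (a+1) i (-1)" for i
  have ccA: "i > 0 \<Longrightarrow> cc a i = - A i" for i unfolding A_def using cc_rA[OF a] by simp
  have split: "(\<Sum>i\<le>Suc m. g i) = g 0 + (\<Sum>i<m. g (Suc i)) + g (Suc m)" for g :: "nat \<Rightarrow> real"
    unfolding sum.atMost_Suc[of g m] sum_split_first[of g m] by simp
  have "(\<Sum>i\<le>n. cc a i * cc a (n - i)) = (\<Sum>i<m. cc a (Suc i) * cc a (Suc m - Suc i))"
    unfolding m split by simp
  also have "\<dots> = (\<Sum>i<m. A (Suc i) * A (Suc m - Suc i))"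
    by (intro sum.cong refl) (auto simp: ccA)
  also have "\<dots> = (\<Sum>i\<le>n. A i * A (n - i)) - 2 * A n"
    unfolding m split by (simp add: A_def)
  also have "(\<Sum>i\<le>n. A i * A (n - i)) = rA (a+1) n (-2)"
    unfolding A_def using rothe[where z="a+1" and n=n and x="-1" and y="-1"] by simp
  finally show ?thesis using cc_rA[OF a n] by (simp add: A_def)
qed

lemma cc_key:
  assumes a: "a > 0"
  shows "(real n - 1) * cc a n = ((1 + a) * real n / 2 - 1) * (\<Sum>i\<le>n. cc a i * cc a (n - i))"
proof (cases "n \<ge> 2")
  case False
  then have "n = 0 \<or> n = 1" by auto
  then show ?thesis by (auto simp: cc_1[OF a])
next
  case True
  then obtain m where m: "n = Suc (Suc m)" by (metis add_2_eq_Suc le_Suc_ex)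
  define Q where "Q = (\<Prod>j<m. a * real n + real m - 1 - real j)"
  have e1: "rA (a+1) n (-1) = - ((a * real n + real m) * Q / fact n)"
  proof -
    have "(\<Prod>j<Suc m. - 1 + real n * (a + 1) - 1 - real j) = (a * real n + real m) * Q"
      unfolding Q_def prod.lessThan_Suc_shift using m by (simp add: algebra_simps)
    then show ?thesis using m by (simp add: rA_def)
  qed
  have e2: "rA (a+1) n (-2) = - (2 * (a * real n - 1) * Q / fact n)"
  proof -
    have "(\<Prod>j<Suc m. - 2 + real n * (a + 1) - 1 - real j) = Q * (a * real n - 1)"
      unfolding Q_def prod.lessThan_Suc using m by (simp add: algebra_simps)
    then show ?thesis using m by (simp add: rA_def)
  qed
  have c: "cc a n = (a * real n + real m) * Q / fact n" using cc_rA[OF a, of n] e1 m by simp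
  have n0: "n > 0" using m by simp
  define K where "K = Q / fact n"
  have c': "cc a n = (a * real n + real m) * K" unfolding c K_def by simp
  have e2': "rA (a+1) n (-2) = - (2 * (a * real n - 1) * K)" unfolding e2 K_def by simp
  show ?thesis unfolding cc_conv[OF a n0] e2' c' using m
    by (simp add: field_simps)
qed

lemma cc_sym:
  "(\<Sum>i\<le>n. real i * (cc a i * cc a (n - i))) = real n / 2 * (\<Sum>i\<le>n. cc a i * cc a (n - i))"
proof -
  have "(\<Sum>i\<le>n. real i * (cc a i * cc a (n - i))) = (\<Sum>i\<le>n. real (n - i) * (cc a (n - i) * cc a (n - (n - i))))"
    unfolding lessThan_Suc_atMost[symmetric]
    using sum.nat_diff_reindex[where n="Suc n" and g="\<lambda>j. real j * (cc a j * cc a (n - j))"] by simp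
  also have "\<dots> = (\<Sum>i\<le>n. (real n - real i) * (cc a i * cc a (n - i)))"
    by (intro sum.cong refl) (auto simp: of_nat_diff)
  finally have "2 * (\<Sum>i\<le>n. real i * (cc a i * cc a (n - i))) = (\<Sum>i\<le>n. real i * (cc a i * cc a (n - i))) + (\<Sum>i\<le>n. (real n - real i) * (cc a i * cc a (n - i)))"
    by simp
  also have "\<dots> = real n * (\<Sum>i\<le>n. cc a i * cc a (n - i))"
    by (simp add: sum.distrib[symmetric] sum_distrib_left algebra_simps)
  finally show ?thesis by simp
qed


lemma phi_alt: "0 \<le> t \<Longrightarrow> a > 0 \<Longrightarrow> phi a t = t powr a * (1 - t)"
  by (cases "t = 0") (auto simp: phi_def powr_add algebra_simps)

lemma phi_nonneg: "0 \<le> t \<Longrightarrow> t \<le> 1 \<Longrightarrow> a > 0 \<Longrightarrow> phi a t \<ge> 0"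
  by (simp add: phi_alt)

lemma phi_cont: "a > 0 \<Longrightarrow> continuous_on {0..1} (phi a)"
  unfolding phi_def
  by (intro continuous_intros continuous_on_powr') auto

lemma phi_deriv: "t > 0 \<Longrightarrow> DERIV (phi a) t :> t powr (a - 1) * (a - (a + 1) * t)"
proof -
  assume t: "t > 0"
  have "DERIV (phi a) t :> a * t powr (a - 1) - (a + 1) * t powr (a + 1 - 1)"
    unfolding phi_def by (intro derivative_intros has_real_derivative_powr t)
  moreover have "t powr (a + 1 - 1) = t powr (a - 1) * t"
    using t powr_add[of t "a - 1" 1] by simp
  ultimately show ?thesis by (simp add: algebra_simps)
qed

lemma xzero_bounds: "a > 0 \<Longrightarrow> 0 < xzero a \<and> xzero a < 1"
  by (simp add: xzero_def)

lemma phi_decr: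
  assumes a: "a > 0" and st: "xzero a \<le> s" "s < t" "t \<le> 1"
  shows "phi a t < phi a s"
proof (rule DERIV_neg_imp_decreasing_open[OF st(2)])
  fix x assume x: "s < x" "x < t"
  have x0: "x > 0" using x st xzero_bounds[OF a] by linarith
  have "a - (a + 1) * x < 0"
  proof -
    have "a \<le> (a + 1) * s" using st a by (simp add: xzero_def field_simps)
    moreover have "(a + 1) * s < (a + 1) * x" using x a by (intro mult_strict_left_mono) auto
    ultimately have "a < (a + 1) * x" by linarith
    then show ?thesis by simp
  qed
  then show "\<exists>y. DERIV (phi a) x :> y \<and> y < 0"
    using phi_deriv[OF x0, of a] x0 by (intro exI[of _ "x powr (a - 1) * (a - (a + 1) * x)"] conjI) (auto simp: mult_pos_neg)
next
  show "continuous_on {s..t} (phi a)"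
    by (rule continuous_on_subset[OF phi_cont[OF a]]) (use st xzero_bounds[OF a] in auto)
qed

lemma phi_incr:
  assumes a: "a > 0" and st: "0 \<le> s" "s < t" "t \<le> xzero a"
  shows "phi a s < phi a t"
proof (rule DERIV_pos_imp_increasing_open[OF st(2)])
  fix x assume x: "s < x" "x < t"
  have x0: "x > 0" using x st by linarith
  have "a - (a + 1) * x > 0"
  proof -
    have "(a + 1) * t \<le> a" using st a by (simp add: xzero_def field_simps)
    moreover have "(a + 1) * x < (a + 1) * t" using x a by (intro mult_strict_left_mono) auto
    ultimately have "(a + 1) * x < a" by linarith
    then show ?thesis by simp
  qed
  then show "\<exists>y. DERIV (phi a) x :> y \<and> y > 0"
    using phi_deriv[OF x0, of a] x0 by (intro exI[of _ "x powr (a - 1) * (a - (a + 1) * x)"] conjI) auto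
next
  show "continuous_on {s..t} (phi a)"
    by (rule continuous_on_subset[OF phi_cont[OF a]]) (use st xzero_bounds[OF a] in auto)
qed

lemma phi_le_max:
  assumes a: "a > 0" and x: "0 \<le> x" "x \<le> 1"
  shows "phi a x \<le> phi a (xzero a)"
proof (cases "x < xzero a")
  case True then show ?thesis using phi_incr[OF a x(1) True] by simp
next
  case False
  then show ?thesis using phi_decr[OF a, of "xzero a" x] x by (cases "x = xzero a") auto
qed

lemma rinv_eq:
  assumes a: "a > 0" and t: "xzero a \<le> t" "t \<le> 1" and y: "phi a t = y"
  shows "rinv a y = t"
  unfolding rinv_def
proof (rule the_equality)
  show "t \<in> {xzero a..1} \<and> phi a t = y" using t y by auto
next
  fix t' assume "t' \<in> {xzero a..1} \<and> phi a t' = y"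
  then have t': "xzero a \<le> t'" "t' \<le> 1" "phi a t' = y" by auto
  show "t' = t"
  proof (rule ccontr)
    assume "t' \<noteq> t"
    then have "t' < t \<or> t < t'" by auto
    then show False using phi_decr[OF a] t t' y by (metis less_irrefl)
  qed
qed


lemma lnGamma_convex: "convex_on {0<..} (\<lambda>v. ln (Gamma v :: real))"
  using log_convex_Gamma_real by (simp add: o_def)

lemma lnGamma_step: "v > 0 \<Longrightarrow> ln (Gamma (v + 1)) - ln (Gamma v) = ln (v::real)"
proof -
  assume v: "v > 0"
  have "v \<notin> \<int>\<^sub>\<le>\<^sub>0" using v by auto
  then have "Gamma (v + 1) = v * Gamma v" by (rule Gamma_plus1)
  moreover have g: "Gamma v \<noteq> 0" using Gamma_real_pos[OF v] by linarith
  ultimately show ?thesis using v ln_mult[of v "Gamma v"] g by simp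
qed

lemma gamma_upper:
  fixes x b :: real assumes x: "x > 0" and b: "b > 0"
  shows "Gamma (x + b) / Gamma x \<le> (x + b) powr b"
proof -
  let ?f = "\<lambda>v. ln (Gamma v :: real)"
  have s1: "(?f x - ?f (x + b)) / (x - (x + b)) \<le> (?f x - ?f (x + b + 1)) / (x - (x + b + 1))"
    using convex_on_slope_le(1)[OF lnGamma_convex, of x "x + b + 1" "x + b"] x b by auto
  have s2: "(?f x - ?f (x + b + 1)) / (x - (x + b + 1)) \<le> (?f (x + b) - ?f (x + b + 1)) / ((x + b) - (x + b + 1))"
    using convex_on_slope_le(2)[OF lnGamma_convex, of x "x + b + 1" "x + b"] x b by auto
  have st: "?f (x + b + 1) - ?f (x + b) = ln (x + b)" using lnGamma_step[of "x + b"] x b by simp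
  from s1 s2 have "(?f x - ?f (x + b)) / (- b) \<le> ln (x + b)" using st by simp
  then have "?f (x + b) - ?f x \<le> b * ln (x + b)" using b by (simp add: field_simps)
  then have "exp (?f (x + b) - ?f x) \<le> exp (b * ln (x + b))" by simp
  moreover have "exp (?f (x + b) - ?f x) = Gamma (x + b) / Gamma x"
    using x b Gamma_real_pos[of x] Gamma_real_pos[of "x + b"] by (simp add: exp_diff)
  moreover have "exp (b * ln (x + b)) = (x + b) powr b" using x b by (simp add: powr_def)
  ultimately show ?thesis by simp
qed

lemma gamma_lower:
  fixes x b :: real assumes x: "x > 1" and b: "b > 0"
  shows "(x - 1) powr b \<le> Gamma (x + b) / Gamma x"
proof -
  let ?f = "\<lambda>v. ln (Gamma v :: real)"
  have s1: "(?f (x - 1) - ?f x) / ((x - 1) - x) \<le> (?f (x - 1) - ?f (x + b)) / ((x - 1) - (x + b))"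
    using convex_on_slope_le(1)[OF lnGamma_convex, of "x - 1" "x + b" x] x b by auto
  have s2: "(?f (x - 1) - ?f (x + b)) / ((x - 1) - (x + b)) \<le> (?f x - ?f (x + b)) / (x - (x + b))"
    using convex_on_slope_le(2)[OF lnGamma_convex, of "x - 1" "x + b" x] x b by auto
  have st: "?f x - ?f (x - 1) = ln (x - 1)" using lnGamma_step[of "x - 1"] x by simp
  from s1 s2 have "ln (x - 1) \<le> (?f x - ?f (x + b)) / (- b)" using st by simp
  then have "b * ln (x - 1) \<le> ?f (x + b) - ?f x" using b by (simp add: field_simps)
  then have "exp (b * ln (x - 1)) \<le> exp (?f (x + b) - ?f x)" by simp
  moreover have "exp (?f (x + b) - ?f x) = Gamma (x + b) / Gamma x"
    using x b Gamma_real_pos[of x] Gamma_real_pos[of "x + b"] by (simp add: exp_diff)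
  moreover have "exp (b * ln (x - 1)) = (x - 1) powr b" using x b by (simp add: powr_def)
  ultimately show ?thesis by simp
qed

lemma cc_ratio:
  assumes a: "a > 0" and n: "a * real n > 1"
  shows "cc a (Suc n) \<le> cc a n * ((a + 1) * ((a + 1) * (real n + 1) / (a * real n - 1)) powr a)"
proof -
  have n0: "n > 0" using n by (cases n) auto
  define B where "B = a * real n"
  define A where "A = B + real n - 1"
  have B1: "B > 1" using n B_def by simp
  have A0: "A > 0" using B1 n0 A_def by simp
  have An: "a * real n + real (n - 1) = A" using n0 by (simp add: A_def B_def of_nat_diff)
  have A2: "a * real (Suc n) + real (Suc n - 1) = A + (a + 1)" by (simp add: A_def B_def algebra_simps)
  have B2: "a * real (Suc n) = B + a" by (simp add: B_def algebra_simps)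
  have GA: "Gamma A > 0" using A0 by simp
  have GB: "Gamma B > 0" using B1 by simp
  have GBa: "Gamma (B + a) > 0" using B1 a by simp
  have GAa: "Gamma (A + (a + 1)) > 0" using A0 a by simp
  define G1 where "G1 = Gamma (A + (a + 1)) / Gamma A"
  define G2 where "G2 = Gamma (B + a) / Gamma B"
  have G1: "G1 \<le> (A + (a + 1)) powr (a + 1)" unfolding G1_def using gamma_upper[OF A0, of "a + 1"] a by simp
  have G2: "(B - 1) powr a \<le> G2" unfolding G2_def using gamma_lower[OF B1 a] by simp
  have G2p: "G2 > 0" unfolding G2_def using GBa GB by simp
  have G1p: "G1 > 0" unfolding G1_def using GAa GA by simp
  have ccn0: "cc a n = poch (a * real n) (n - 1) / fact n" using n0 by (simp add: cc_def)
  have ccn: "cc a n = Gamma A / Gamma B / fact n" unfolding ccn0 poch_def An B_def ..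
  have ccSn: "cc a (Suc n) = Gamma (A + (a + 1)) / Gamma (B + a) / fact (Suc n)"
  proof -
    have "cc a (Suc n) = poch (a * real (Suc n)) (Suc n - 1) / fact (Suc n)"
      unfolding cc_def by (rule if_not_P) simp
    moreover have "B + a + real (Suc n - 1) = A + (a + 1)" by (simp add: A_def)
    ultimately show ?thesis unfolding poch_def B2 by metis
  qed
  have eq: "cc a (Suc n) = cc a n * (G1 / (G2 * (real n + 1)))"
  proof -
    have gen: "\<And>x y z w f m::real. x>0 \<Longrightarrow> y>0 \<Longrightarrow> z>0 \<Longrightarrow> w>0 \<Longrightarrow> f>0 \<Longrightarrow> m>0 \<Longrightarrow>
       w/z/(m*f) = x/y/f * ((w/x)/((z/y)*m))" by (simp add: field_simps)
    have fs: "fact (Suc n) = (real n + 1) * fact n" by simp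
    show ?thesis unfolding ccSn ccn G1_def G2_def fs
      by (rule gen[OF GA GB GBa GAa]) auto
  qed
  have "G1 / (G2 * (real n + 1)) \<le> (A + (a + 1)) powr (a + 1) / ((B - 1) powr a * (real n + 1))"
    using G1 G2 G1p G2p B1 by (intro frac_le mult_right_mono) auto
  also have "(A + (a + 1)) powr (a + 1) \<le> ((a + 1) * (real n + 1)) powr (a + 1)"
    using A0 a by (intro powr_mono2) (auto simp: A_def B_def algebra_simps)
  then have "(A + (a + 1)) powr (a + 1) / ((B - 1) powr a * (real n + 1))
      \<le> ((a + 1) * (real n + 1)) powr (a + 1) / ((B - 1) powr a * (real n + 1))"
    using B1 by (intro divide_right_mono) auto
  also have "((a + 1) * (real n + 1)) powr (a + 1) = ((a + 1) * (real n + 1)) powr a * ((a + 1) * (real n + 1))"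
    using a by (simp add: powr_add)
  also have "\<dots> / ((B - 1) powr a * (real n + 1)) = (a + 1) * (((a + 1) * (real n + 1)) powr a / (B - 1) powr a)"
  proof -
    have Q: "(B - 1) powr a > 0" using B1 by simp
    have gen: "\<And>P Q c m::real. Q > 0 \<Longrightarrow> m > 0 \<Longrightarrow> P * (c * m) / (Q * m) = c * (P / Q)"
      by (simp add: field_simps)
    show ?thesis by (rule gen[OF Q]) auto
  qed
  also have "((a + 1) * (real n + 1)) powr a / (B - 1) powr a = ((a + 1) * (real n + 1) / (B - 1)) powr a"
    using B1 a by (simp add: powr_divide)
  finally have "G1 / (G2 * (real n + 1)) \<le> (a + 1) * ((a + 1) * (real n + 1) / (a * real n - 1)) powr a"
    by (simp add: B_def)
  then show ?thesis unfolding eq using cc_nonneg[OF a, of n] by (intro mult_left_mono) auto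
qed

definition ymax :: "real \<Rightarrow> real" where "ymax a = phi a (xzero a)"

lemma ymax_eq: "a > 0 \<Longrightarrow> ymax a = (a / (a + 1)) powr a / (a + 1)"
proof -
  assume a: "a > 0"
  have "1 - a / (a + 1) = 1 / (a + 1)" using a by (simp add: field_simps)
  then show ?thesis using a by (simp add: ymax_def xzero_def phi_alt)
qed

lemma ymax_pos: "a > 0 \<Longrightarrow> ymax a > 0"
  by (simp add: ymax_eq)

lemma ev_big:
  assumes a: "a > 0" shows "eventually (\<lambda>n. a * real n > 1) sequentially"
proof -
  obtain M :: nat where M: "real M > 1 / a" using reals_Archimedean2 by blast
  show ?thesis
    using eventually_ge_at_top[of M]
  proof eventually_elim
    case (elim n)
    then have "real n > 1 / a" using M by (meson less_le_trans of_nat_le_iff)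
    then show ?case using a by (simp add: field_simps)
  qed
qed

lemma theta_lim:
  assumes a: "a > 0"
  shows "(\<lambda>n. (a + 1) * ((a + 1) * (real n + 1) / (a * real n - 1)) powr a)
           \<longlonglongrightarrow> (a + 1) * ((a + 1) / a) powr a"
proof -
  have "(\<lambda>n. (a + 1) * (1 + 1 / real n) / (a - 1 / real n)) \<longlonglongrightarrow> (a + 1) * (1 + 0) / (a - 0)"
    using a by (intro tendsto_intros lim_inverse_n') auto
  then have l1: "(\<lambda>n. (a + 1) * (1 + 1 / real n) / (a - 1 / real n)) \<longlonglongrightarrow> (a + 1) / a" by simp
  have "eventually (\<lambda>n. (a + 1) * (1 + 1 / real n) / (a - 1 / real n) = (a + 1) * (real n + 1) / (a * real n - 1)) sequentially"
    using eventually_conj[OF eventually_gt_at_top[of 0] ev_big[OF a]]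
  proof eventually_elim
    case (elim n)
    then have "real n > 0" "a * real n - 1 \<noteq> 0" by auto
    then show ?case by (simp add: field_simps)
  qed
  with l1 have l2: "(\<lambda>n. (a + 1) * (real n + 1) / (a * real n - 1)) \<longlonglongrightarrow> (a + 1) / a"
    by (rule Lim_transform_eventually)
  show ?thesis using a by (intro tendsto_intros l2) auto
qed

lemma cc_summable:
  assumes a: "a > 0" and K: "0 \<le> K" "K < ymax a"
  shows "summable (\<lambda>n. cc a n * K ^ n)"
proof -
  define L where "L = (a + 1) * ((a + 1) / a) powr a"
  have Lym: "L * ymax a = 1"
  proof -
    have "L * ymax a = ((a + 1) / a) powr a * (a / (a + 1)) powr a"
      using a by (simp add: L_def ymax_eq)
    also have "\<dots> = (((a + 1) / a) * (a / (a + 1))) powr a"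
      using a powr_mult[of "(a+1)/a" "a/(a+1)" a] by simp
    also have "\<dots> = 1" using a by simp
    finally show ?thesis .
  qed
  have Lpos: "L > 0" using a by (simp add: L_def)
  have KL: "K * L < 1" using K Lpos Lym by (metis mult.commute mult_strict_left_mono)
  define q where "q = (1 + K * L) / 2"
  have q: "K * L < q" "q < 1" using KL by (auto simp: q_def)
  have "(\<lambda>n. K * ((a + 1) * ((a + 1) * (real n + 1) / (a * real n - 1)) powr a)) \<longlonglongrightarrow> K * L"
    unfolding L_def by (intro tendsto_intros theta_lim a)
  then have ev1: "eventually (\<lambda>n. K * ((a + 1) * ((a + 1) * (real n + 1) / (a * real n - 1)) powr a) < q) sequentially"
    using q(1) by (rule order_tendstoD)
  have ev2: "eventually (\<lambda>n. a * real n > 1) sequentially" by (rule ev_big[OF a])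
  from eventually_conj[OF ev1 ev2] obtain N where N: "\<And>n. n \<ge> N \<Longrightarrow>
      K * ((a + 1) * ((a + 1) * (real n + 1) / (a * real n - 1)) powr a) < q \<and> a * real n > 1"
    unfolding eventually_sequentially by blast
  show ?thesis
  proof (rule summable_ratio_test[OF q(2), of N])
    fix n assume n: "n \<ge> N"
    define th where "th = (a + 1) * ((a + 1) * (real n + 1) / (a * real n - 1)) powr a"
    have th: "K * th < q" "a * real n > 1" using N[OF n] by (auto simp: th_def)
    have c: "cc a (Suc n) \<le> cc a n * th" unfolding th_def by (rule cc_ratio[OF a th(2)])
    have "norm (cc a (Suc n) * K ^ Suc n) = cc a (Suc n) * K ^ Suc n"
      using cc_nonneg[OF a] K by simp
    also have "\<dots> \<le> cc a n * th * K ^ Suc n" using c K by (intro mult_right_mono) auto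
    also have "\<dots> = (K * th) * (cc a n * K ^ n)" by (simp add: algebra_simps)
    also have "\<dots> \<le> q * (cc a n * K ^ n)"
      using th(1) cc_nonneg[OF a, of n] K by (intro mult_right_mono) auto
    also have "\<dots> = q * norm (cc a n * K ^ n)" using cc_nonneg[OF a, of n] K by simp
    finally show "norm (cc a (Suc n) * K ^ Suc n) \<le> q * norm (cc a n * K ^ n)" .
  qed
qed


definition S :: "real \<Rightarrow> real \<Rightarrow> real" where "S a y = (\<Sum>n. cc a n * y ^ n)"
definition R :: "real \<Rightarrow> real \<Rightarrow> real" where "R a y = (\<Sum>n. cc a (Suc n) * y ^ n)"
definition Sd :: "real \<Rightarrow> real \<Rightarrow> real" where "Sd a y = (\<Sum>n. (real n * cc a n) * y ^ n)"
definition D1 :: "real \<Rightarrow> real \<Rightarrow> real" where "D1 a y = (\<Sum>n. diffs (cc a) n * y ^ n)"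
definition D2 :: "real \<Rightarrow> real \<Rightarrow> real" where "D2 a y = (\<Sum>n. diffs (\<lambda>n. cc a (Suc n)) n * y ^ n)"

context
  fixes a :: real assumes a: "a > 0"
begin

lemma sum_norm: "\<bar>y\<bar> < ymax a \<Longrightarrow> summable (\<lambda>n. norm (cc a n * y ^ n))"
proof -
  assume y: "\<bar>y\<bar> < ymax a"
  have "summable (\<lambda>n. cc a n * \<bar>y\<bar> ^ n)" by (rule cc_summable[OF a]) (use y in auto)
  moreover have "norm (cc a n * y ^ n) = cc a n * \<bar>y\<bar> ^ n" for n
    using cc_nonneg[OF a, of n] by (simp add: abs_mult power_abs)
  ultimately show ?thesis by simp
qed

lemma sum_S: "\<bar>y\<bar> < ymax a \<Longrightarrow> summable (\<lambda>n. cc a n * y ^ n)"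
  by (rule summable_norm_cancel[OF sum_norm])

lemma sum_diffs_norm: "\<bar>y\<bar> < ymax a \<Longrightarrow> summable (\<lambda>n. norm (diffs (cc a) n * y ^ n))"
proof -
  assume y: "\<bar>y\<bar> < ymax a"
  have "summable (\<lambda>n. diffs (cc a) n * \<bar>y\<bar> ^ n)"
    by (rule termdiff_converges[where K = "ymax a"]) (use y sum_S in auto)
  moreover have "norm (diffs (cc a) n * y ^ n) = diffs (cc a) n * \<bar>y\<bar> ^ n" for n
    using cc_nonneg[OF a, of "Suc n"] by (simp add: abs_mult power_abs diffs_def)
  ultimately show ?thesis by simp
qed

lemma sum_Sd_norm: "\<bar>y\<bar> < ymax a \<Longrightarrow> summable (\<lambda>n. norm ((real n * cc a n) * y ^ n))"
proof -
  assume y: "\<bar>y\<bar> < ymax a"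
  have sm: "summable (\<lambda>n. \<bar>y\<bar> * norm (diffs (cc a) n * y ^ n))"
    using sum_diffs_norm[OF y] by (rule summable_mult)
  have eq: "(\<lambda>n. \<bar>y\<bar> * norm (diffs (cc a) n * y ^ n)) = (\<lambda>n. norm ((real (Suc n) * cc a (Suc n)) * y ^ Suc n))"
    by (rule ext) (simp only: diffs_def real_norm_def abs_mult power_Suc ac_simps)
  have "summable (\<lambda>n. norm ((real (Suc n) * cc a (Suc n)) * y ^ Suc n))"
    using sm unfolding eq .
  then show ?thesis by (subst (asm) summable_Suc_iff)
qed

lemma sum_R: "\<bar>y\<bar> < ymax a \<Longrightarrow> summable (\<lambda>n. cc a (Suc n) * y ^ n)"
proof (cases "y = 0")
  case True then show ?thesis by (simp add: summable_0_powser)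
next
  case False
  assume y: "\<bar>y\<bar> < ymax a"
  have "summable (\<lambda>n. cc a (Suc n) * y ^ Suc n)"
    using sum_S[OF y] by (subst summable_Suc_iff)
  then have "summable (\<lambda>n. (cc a (Suc n) * y ^ Suc n) * inverse y)" by (rule summable_mult2)
  then show ?thesis using False by (simp add: field_simps)
qed

lemma S_eq: "\<bar>y\<bar> < ymax a \<Longrightarrow> S a y = y * R a y"
proof -
  assume y: "\<bar>y\<bar> < ymax a"
  have "(\<lambda>n. cc a n * y ^ n) sums S a y" unfolding S_def using sum_S[OF y] by (rule summable_sums)
  then have "(\<lambda>n. cc a (Suc n) * y ^ Suc n) sums S a y" by (subst sums_Suc_iff) simp
  moreover have "(\<lambda>n. y * (cc a (Suc n) * y ^ n)) sums (y * R a y)"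
    unfolding R_def using sum_R[OF y] by (intro sums_mult summable_sums)
  ultimately show ?thesis by (simp add: sums_iff algebra_simps)
qed

lemma Sd_eq: "\<bar>y\<bar> < ymax a \<Longrightarrow> Sd a y = y * D1 a y"
proof -
  assume y: "\<bar>y\<bar> < ymax a"
  have "(\<lambda>n. (real n * cc a n) * y ^ n) sums Sd a y"
    unfolding Sd_def using summable_norm_cancel[OF sum_Sd_norm[OF y]] by (rule summable_sums)
  then have "(\<lambda>n. (real (Suc n) * cc a (Suc n)) * y ^ Suc n) sums Sd a y" by (subst sums_Suc_iff) simp
  moreover have "(\<lambda>n. y * (diffs (cc a) n * y ^ n)) sums (y * D1 a y)"
    unfolding D1_def using summable_norm_cancel[OF sum_diffs_norm[OF y]] by (intro sums_mult summable_sums)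
  ultimately show ?thesis by (simp add: sums_iff algebra_simps diffs_def)
qed

lemma R_0: "R a 0 = 1" unfolding R_def using powser_zero[of "\<lambda>n. cc a (Suc n)"] cc_1[OF a] by simp
lemma S_0: "S a 0 = 0" unfolding S_def using powser_zero[of "cc a"] by simp

lemma DERIV_S: "\<bar>y\<bar> < ymax a \<Longrightarrow> DERIV (S a) y :> D1 a y"
  unfolding S_def D1_def by (rule termdiffs_strong'[where K = "ymax a"]) (use sum_S in auto)

lemma DERIV_R: "\<bar>y\<bar> < ymax a \<Longrightarrow> DERIV (R a) y :> D2 a y"
  unfolding R_def D2_def by (rule termdiffs_strong'[where K = "ymax a"]) (use sum_R in auto)

lemma S_nonneg: "0 \<le> y \<Longrightarrow> y < ymax a \<Longrightarrow> S a y \<ge> 0"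
  unfolding S_def using cc_nonneg[OF a] by (intro suminf_nonneg sum_S) auto

lemma R_ge1: "0 \<le> y \<Longrightarrow> y < ymax a \<Longrightarrow> R a y \<ge> 1"
proof -
  assume y: "0 \<le> y" "y < ymax a"
  have "(\<Sum>n\<in>{0}. cc a (Suc n) * y ^ n) \<le> R a y"
    unfolding R_def using cc_nonneg[OF a] y by (intro sum_le_suminf sum_R) auto
  then show ?thesis using cc_1[OF a] by simp
qed

lemma S_mono: "0 \<le> s \<Longrightarrow> s \<le> t \<Longrightarrow> t < ymax a \<Longrightarrow> S a s \<le> S a t"
  unfolding S_def using cc_nonneg[OF a]
  by (intro suminf_le sum_S mult_left_mono power_mono) auto

end


context
  fixes a :: real assumes a: "a > 0"
begin

lemma inner_eq:
  fixes f g :: "nat \<Rightarrow> real"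
  shows "(\<Sum>i\<le>n. (f i * y ^ i) * (g (n - i) * y ^ (n - i))) = (\<Sum>i\<le>n. f i * g (n - i)) * y ^ n"
  unfolding sum_distrib_right
proof (rule sum.cong[OF refl])
  fix i assume "i \<in> {..n}"
  then have "y ^ i * y ^ (n - i) = y ^ n" by (simp add: power_add[symmetric])
  then show "(f i * y ^ i) * (g (n - i) * y ^ (n - i)) = f i * g (n - i) * y ^ n"
    by (metis mult.assoc mult.left_commute)
qed

lemma ode: "\<bar>y\<bar> < ymax a \<Longrightarrow> Sd a y * (1 - (1 + a) * S a y) = S a y * (1 - S a y)"
proof -
  assume y: "\<bar>y\<bar> < ymax a"
  define T where "T n = (\<Sum>i\<le>n. cc a i * cc a (n - i))" for n
  have c1: "(\<lambda>n. \<Sum>i\<le>n. ((real i * cc a i) * y ^ i) * (cc a (n - i) * y ^ (n - i))) sums (Sd a y * S a y)"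
    unfolding Sd_def S_def by (rule Cauchy_product_sums[OF sum_Sd_norm[OF a y] sum_norm[OF a y]])
  have e1: "(\<Sum>i\<le>n. ((real i * cc a i) * y ^ i) * (cc a (n - i) * y ^ (n - i))) = (real n / 2 * T n) * y ^ n" for n
    using inner_eq[where f="\<lambda>i. real i * cc a i" and g="cc a" and n=n and y=y]
    unfolding T_def cc_sym[symmetric] by (simp add: mult.assoc)
  have c1': "(\<lambda>n. (real n / 2 * T n) * y ^ n) sums (Sd a y * S a y)" using c1 unfolding e1 .
  have c2: "(\<lambda>n. \<Sum>i\<le>n. (cc a i * y ^ i) * (cc a (n - i) * y ^ (n - i))) sums (S a y * S a y)"
    unfolding S_def by (rule Cauchy_product_sums[OF sum_norm[OF a y] sum_norm[OF a y]])
  have e2: "(\<Sum>i\<le>n. (cc a i * y ^ i) * (cc a (n - i) * y ^ (n - i))) = T n * y ^ n" for n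
    using inner_eq[where f="cc a" and g="cc a" and n=n and y=y] unfolding T_def .
  have c2': "(\<lambda>n. T n * y ^ n) sums (S a y * S a y)" using c2 unfolding e2 .
  have s1: "(\<lambda>n. (real n * cc a n) * y ^ n) sums Sd a y"
    unfolding Sd_def using summable_norm_cancel[OF sum_Sd_norm[OF a y]] by (rule summable_sums)
  have s2: "(\<lambda>n. cc a n * y ^ n) sums S a y"
    unfolding S_def using sum_S[OF a y] by (rule summable_sums)
  have L: "(\<lambda>n. (real n * cc a n) * y ^ n - (1 + a) * ((real n / 2 * T n) * y ^ n))
      sums (Sd a y - (1 + a) * (Sd a y * S a y))"
    by (intro sums_diff sums_mult s1 c1')
  have Rr: "(\<lambda>n. cc a n * y ^ n - T n * y ^ n) sums (S a y - S a y * S a y)"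
    by (intro sums_diff s2 c2')
  have "(real n * cc a n) * y ^ n - (1 + a) * ((real n / 2 * T n) * y ^ n) = cc a n * y ^ n - T n * y ^ n" for n
  proof -
    have k: "(real n - 1) * cc a n = ((1 + a) * real n / 2 - 1) * T n" unfolding T_def by (rule cc_key[OF a])
    have "real n * cc a n - (1 + a) * (real n / 2 * T n) = cc a n - T n"
      using k by (simp add: field_simps)
    then have "(real n * cc a n - (1 + a) * (real n / 2 * T n)) * y ^ n = (cc a n - T n) * y ^ n" by simp
    then show ?thesis by (simp only: left_diff_distrib mult.assoc)
  qed
  then have "(\<lambda>n. cc a n * y ^ n - T n * y ^ n) sums (Sd a y - (1 + a) * (Sd a y * S a y))"
    using L by simp
  from sums_unique2[OF this Rr] show ?thesis by (simp add: algebra_simps)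
qed

end


context
  fixes a :: real assumes a: "a > 0"
begin

lemma D1_eq: "\<bar>t\<bar> < ymax a \<Longrightarrow> D1 a t = R a t + t * D2 a t"
proof -
  assume t: "\<bar>t\<bar> < ymax a"
  have "DERIV (\<lambda>t. t * R a t) t :> 1 * R a t + D2 a t * t"
    by (rule DERIV_mult[OF DERIV_ident DERIV_R[OF a t]])
  moreover have op: "open {t::real. \<bar>t\<bar> < ymax a}"
    by (intro open_Collect_less continuous_intros)
  ultimately have "DERIV (S a) t :> 1 * R a t + D2 a t * t"
    by (rule has_field_derivative_transform_within_open[where S = "{t. \<bar>t\<bar> < ymax a}"])
       (use t S_eq[OF a] in auto)
  with DERIV_S[OF a t] show ?thesis by (simp add: DERIV_unique algebra_simps)
qed

lemma FE:
  assumes y: "0 < y" "y < ymax a" and lt1: "\<And>t. 0 \<le> t \<Longrightarrow> t \<le> y \<Longrightarrow> S a t < 1"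
  shows "S a y * (1 - S a y) powr a = y"
proof -
  define W where "W t = ln (R a t) + a * ln (1 - S a t)" for t
  define W' where "W' t = 1 / R a t * D2 a t + a * (1 / (1 - S a t) * (0 - D1 a t))" for t
  have dW: "DERIV W t :> W' t" if t: "0 \<le> t" "t \<le> y" for t
  proof -
    have tb: "\<bar>t\<bar> < ymax a" using t y by auto
    have Rp: "R a t > 0" using R_ge1[OF a, of t] t tb by auto
    have Sp: "1 - S a t > 0" using lt1[OF t] by simp
    have d1: "DERIV (\<lambda>t. ln (R a t)) t :> 1 / R a t * D2 a t"
      by (rule DERIV_chain2[OF DERIV_ln_divide[OF Rp] DERIV_R[OF a tb]])
    have d2: "DERIV (\<lambda>t. ln (1 - S a t)) t :> 1 / (1 - S a t) * (0 - D1 a t)"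
      by (rule DERIV_chain2[OF DERIV_ln_divide[OF Sp] DERIV_diff[OF DERIV_const DERIV_S[OF a tb]]])
    show ?thesis unfolding W_def W'_def by (intro DERIV_add d1 DERIV_cmult d2)
  qed
  have W'0: "W' t = 0" if t: "0 < t" "t < y" for t
  proof -
    have tb: "\<bar>t\<bar> < ymax a" using t y by auto
    define r where "r = R a t"
    define s where "s = S a t"
    define r' where "r' = D2 a t"
    define s' where "s' = D1 a t"
    have Rp: "r > 0" using R_ge1[OF a, of t] t tb r_def by auto
    have Sp: "1 - s > 0" using lt1[of t] t s_def by simp
    have e1: "s = t * r" unfolding s_def r_def by (rule S_eq[OF a tb])
    have e2: "s' = r + t * r'" unfolding s'_def r_def r'_def by (rule D1_eq[OF tb])
    have od: "(t * s') * (1 - (1 + a) * s) = s * (1 - s)"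
      using ode[OF a tb] Sd_eq[OF a tb] unfolding s_def s'_def by simp
    have od2: "s' * (1 - (1 + a) * s) = r * (1 - s)"
    proof -
      have "t * (s' * (1 - (1 + a) * s)) = t * (r * (1 - s))" using od e1 by (simp add: algebra_simps)
      then show ?thesis using t by simp
    qed
    have "t * r * (1 - s) * W' t = t * r' * (1 - s) - a * t * r * s'"
      unfolding W'_def using Rp Sp by (simp add: r_def s_def r'_def s'_def field_simps)
    also have "\<dots> = (s' - r) * (1 - s) - a * s * s'" using e1 e2 by (simp add: algebra_simps)
    also have "\<dots> = (s' * (1 - (1 + a) * s)) - r * (1 - s)" by (simp add: algebra_simps)
    also have "\<dots> = 0" using od2 by simp
    finally have "t * r * (1 - s) * W' t = 0" .
    then show ?thesis using t Rp Sp by simp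
  qed
  have cont: "continuous_on {0..y} W"
    using dW by (intro continuous_at_imp_continuous_on ballI DERIV_isCont) auto
  obtain l z where z: "0 < z" "z < y" "DERIV W z :> l" "W y - W 0 = (y - 0) * l"
    using MVT[OF y(1) cont] dW unfolding real_differentiable_def by (metis less_imp_le order.strict_trans2)
  have "l = W' z" using DERIV_unique[OF z(3) dW] z by auto
  then have "l = 0" using W'0 z by simp
  moreover have "W 0 = 0" unfolding W_def using R_0[OF a] S_0[OF a] by simp
  ultimately have W0: "W y = 0" using z by simp
  have ty: "\<bar>y\<bar> < ymax a" using y by auto
  have Rp: "R a y > 0" using R_ge1[OF a, of y] y by auto
  have Sp: "1 - S a y > 0" using lt1[of y] y by simp
  have "R a y * (1 - S a y) powr a = exp (ln (R a y)) * exp (a * ln (1 - S a y))"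
    using Rp Sp by (simp add: powr_def)
  also have "\<dots> = exp (W y)" unfolding W_def by (simp add: exp_add)
  also have "\<dots> = 1" using W0 by simp
  finally have "R a y * (1 - S a y) powr a = 1" .
  then show ?thesis using S_eq[OF a ty] by (metis mult.assoc mult.right_neutral)
qed

end


context
  fixes a :: real assumes a: "a > 0"
begin

lemma ymax_b: "(1 / (a + 1)) * (1 - 1 / (a + 1)) powr a = ymax a"
proof -
  have x0: "xzero a = 1 - 1 / (a + 1)" using a by (simp add: xzero_def field_simps)
  have "ymax a = xzero a powr a * (1 - xzero a)"
    unfolding ymax_def using a xzero_bounds[OF a] by (simp add: phi_alt)
  then show ?thesis unfolding x0 by simp
qed

lemma S_cont: "y < ymax a \<Longrightarrow> continuous_on {0..y} (S a)"
proof -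
  assume y: "y < ymax a"
  show ?thesis
  proof (intro continuous_at_imp_continuous_on ballI)
    fix t assume "t \<in> {0..y}"
    then have "\<bar>t\<bar> < ymax a" using y by auto
    then show "isCont (S a) t" by (rule DERIV_isCont[OF DERIV_S[OF a]])
  qed
qed

lemma S_lt: "0 \<le> y \<Longrightarrow> y < ymax a \<Longrightarrow> S a y < 1 / (a + 1)"
proof (rule ccontr)
  assume y: "0 \<le> y" "y < ymax a" and "\<not> S a y < 1 / (a + 1)"
  then have ge: "1 / (a + 1) \<le> S a y" by simp
  have "S a 0 \<le> 1 / (a + 1)" using S_0[OF a] a by simp
  then obtain y3 where y3: "0 \<le> y3" "y3 \<le> y" "S a y3 = 1 / (a + 1)"
    using IVT'[of "S a" 0 "1 / (a + 1)" y] ge y S_cont[OF y(2)] by auto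
  have "y3 \<noteq> 0" using y3 S_0[OF a] a by auto
  then have y3p: "y3 > 0" using y3 by simp
  have "S a y3 * (1 - S a y3) powr a = y3"
  proof (rule FE[OF a y3p])
    show "y3 < ymax a" using y3 y by simp
    fix t assume t: "0 \<le> t" "t \<le> y3"
    have "S a t \<le> S a y3" using S_mono[OF a t(1) t(2)] y3 y by simp
    also have "\<dots> < 1" using y3 a by simp
    finally show "S a t < 1" .
  qed
  then have "y3 = ymax a" using ymax_b y3 by simp
  then show False using y3 y by simp
qed

lemma S_main: "0 \<le> y \<Longrightarrow> y < ymax a \<Longrightarrow> S a y * (1 - S a y) powr a = y"
proof -
  assume y: "0 \<le> y" "y < ymax a"
  show ?thesis
  proof (cases "y = 0")
    case True then show ?thesis using S_0[OF a] by simp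
  next
    case False
    show ?thesis
    proof (rule FE[OF a _ y(2)])
      show "0 < y" using False y by simp
      fix t assume t: "0 \<le> t" "t \<le> y"
      have "S a t < 1 / (a + 1)" using S_lt t y by simp
      also have "\<dots> \<le> 1" using a by simp
      finally show "S a t < 1" .
    qed
  qed
qed

lemma phi_S: "0 \<le> y \<Longrightarrow> y < ymax a \<Longrightarrow> phi a (1 - S a y) = y"
proof -
  assume y: "0 \<le> y" "y < ymax a"
  have "S a y \<ge> 0" by (rule S_nonneg[OF a y])
  moreover have "S a y < 1" using S_lt[OF y] a by (smt (verit) divide_le_eq_1_pos)
  ultimately show ?thesis using S_main[OF y] a by (simp add: phi_alt mult.commute)
qed

lemma rinv_S: "0 \<le> y \<Longrightarrow> y < ymax a \<Longrightarrow> rinv a y = 1 - S a y"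
proof -
  assume y: "0 \<le> y" "y < ymax a"
  have x0: "xzero a = 1 - 1 / (a + 1)" using a by (simp add: xzero_def field_simps)
  show ?thesis
  proof (rule rinv_eq[OF a])
    show "xzero a \<le> 1 - S a y" using S_lt[OF y] x0 by simp
    show "1 - S a y \<le> 1" using S_nonneg[OF a y] by simp
    show "phi a (1 - S a y) = y" by (rule phi_S[OF y])
  qed
qed

lemma partial_bound: "(\<Sum>n<N. cc a n * ymax a ^ n) \<le> 1 / (a + 1)"
proof (rule tendsto_le[OF trivial_limit_at_left_real])
  show "((\<lambda>_. 1 / (a + 1)) \<longlongrightarrow> 1 / (a + 1)) (at_left (ymax a))" by simp
  show "((\<lambda>y. \<Sum>n<N. cc a n * y ^ n) \<longlongrightarrow> (\<Sum>n<N. cc a n * ymax a ^ n)) (at_left (ymax a))"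
    by (intro tendsto_intros)
  show "eventually (\<lambda>y. (\<Sum>n<N. cc a n * y ^ n) \<le> 1 / (a + 1)) (at_left (ymax a))"
    using eventually_at_left_real[OF ymax_pos[OF a]]
  proof eventually_elim
    case (elim y)
    then have y: "0 \<le> y" "y < ymax a" by auto
    have "(\<Sum>n<N. cc a n * y ^ n) \<le> S a y"
      unfolding S_def using y cc_nonneg[OF a] by (intro sum_le_suminf sum_S[OF a]) auto
    also have "\<dots> \<le> 1 / (a + 1)" using S_lt[OF y] by simp
    finally show ?case .
  qed
qed

lemma sum_ymax: "summable (\<lambda>n. cc a n * ymax a ^ n)"
  by (rule summableI_nonneg_bounded[OF _ partial_bound]) (use cc_nonneg[OF a] ymax_pos[OF a] in simp)

lemma S_ymax: "S a (ymax a) = 1 / (a + 1)"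
proof (rule antisym)
  show "S a (ymax a) \<le> 1 / (a + 1)" unfolding S_def by (rule suminf_le_const[OF sum_ymax partial_bound])
next
  show "1 / (a + 1) \<le> S a (ymax a)"
  proof (rule ccontr)
    define s where "s = S a (ymax a)"
    assume "\<not> 1 / (a + 1) \<le> S a (ymax a)"
    then have s: "s < 1 / (a + 1)" unfolding s_def by simp
    have s0: "s \<ge> 0" unfolding s_def S_def using cc_nonneg[OF a] ymax_pos[OF a]
      by (intro suminf_nonneg sum_ymax) simp
    have x0: "xzero a = 1 - 1 / (a + 1)" using a by (simp add: xzero_def field_simps)
    have p1: "phi a (1 - s) < ymax a"
      unfolding ymax_def by (rule phi_decr[OF a]) (use s s0 x0 in auto)
    define y where "y = (phi a (1 - s) + ymax a) / 2"
    have "1 / (a + 1) \<le> 1" using a by simp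
    then have sle: "s \<le> 1" using s by linarith
    have p0: "phi a (1 - s) \<ge> 0" using s0 sle a by (intro phi_nonneg) auto
    have y: "0 \<le> y" "y < ymax a" "phi a (1 - s) < y" using p1 p0 unfolding y_def by auto
    have Sy: "S a y \<le> s" unfolding S_def s_def using y cc_nonneg[OF a]
      by (intro suminf_le sum_S[OF a] sum_ymax mult_left_mono power_mono) auto
    have "y = phi a (1 - S a y)" using phi_S[OF y(1,2)] by simp
    also have "\<dots> \<le> phi a (1 - s)"
    proof (cases "S a y = s")
      case False
      then have "1 - s < 1 - S a y" using Sy by simp
      moreover have "1 - S a y \<le> 1" using S_nonneg[OF a y(1,2)] by simp
      ultimately show ?thesis using phi_decr[OF a, of "1 - s" "1 - S a y"] s x0 by simp
    qed simp
    finally show False using y by simp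
  qed
qed

lemma rinv_all: "0 \<le> y \<Longrightarrow> y \<le> ymax a \<Longrightarrow> summable (\<lambda>n. cc a n * y ^ n) \<and> rinv a y = 1 - S a y"
proof -
  assume y: "0 \<le> y" "y \<le> ymax a"
  show ?thesis
  proof (cases "y = ymax a")
    case True
    have x0: "xzero a = 1 - 1 / (a + 1)" using a by (simp add: xzero_def field_simps)
    have "rinv a (ymax a) = xzero a"
      by (rule rinv_eq[OF a]) (use xzero_bounds[OF a] in \<open>auto simp: ymax_def\<close>)
    then show ?thesis using True sum_ymax S_ymax x0 by simp
  next
    case False
    then have "y < ymax a" using y by simp
    then show ?thesis using sum_S[OF a] rinv_S y by simp
  qed
qed

end

theorem proposition2:
  fixes a x :: real
  assumes "a > 0" and "0 \<le> x" and "x \<le> 1"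
  shows "summable (\<lambda>n. \<bar>term_a a x (Suc n)\<bar>)
    \<and> 1 - (\<Sum>n. term_a a x (Suc n)) = g_fun a x
    \<and> (x \<le> xzero a \<longrightarrow> 1 - (\<Sum>n. term_a a x (Suc n)) = f_fun a x)
    \<and> (xzero a \<le> x \<longrightarrow> 1 - (\<Sum>n. term_a a x (Suc n)) = x)"
proof -
  note a = assms(1)
  define y where "y = x powr a * (1 - x)"
  have yphi: "phi a x = y" unfolding y_def using assms by (simp add: phi_alt)
  have y0: "0 \<le> y" using phi_nonneg[OF assms(2,3) a] yphi by simp
  have y1: "y \<le> ymax a" using phi_le_max[OF a assms(2,3)] yphi ymax_def by simp
  obtain sm: "summable (\<lambda>n. cc a n * y ^ n)" and ri: "rinv a y = 1 - S a y"
    using rinv_all[OF a y0 y1] by blast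
  have tm: "term_a a x (Suc n) = cc a (Suc n) * y ^ Suc n" for n
    unfolding term_a_def cc_def y_def by simp
  have nn: "\<bar>term_a a x (Suc n)\<bar> = term_a a x (Suc n)" for n
    unfolding tm using cc_nonneg[OF a, of "Suc n"] y0 by simp
  have "(\<lambda>n. cc a n * y ^ n) sums S a y" unfolding S_def using sm by (rule summable_sums)
  then have sS: "(\<lambda>n. term_a a x (Suc n)) sums S a y" unfolding tm by (subst sums_Suc_iff) simp
  have s1: "summable (\<lambda>n. \<bar>term_a a x (Suc n)\<bar>)" unfolding nn using sS by (rule sums_summable)
  have s2: "1 - (\<Sum>n. term_a a x (Suc n)) = g_fun a x"
    unfolding g_fun_def yphi ri using sS by (simp add: sums_iff)
  have s3: "x \<le> xzero a \<longrightarrow> 1 - (\<Sum>n. term_a a x (Suc n)) = f_fun a x"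
    using s2 by (simp add: f_fun_def g_fun_def)
  have s4: "xzero a \<le> x \<longrightarrow> 1 - (\<Sum>n. term_a a x (Suc n)) = x"
    using s2 rinv_eq[OF a _ assms(3) refl] by (simp add: g_fun_def)
  show ?thesis using s1 s2 s3 s4 by blast
qed


end
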